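(* Consider a twice continuously differentiable function $f(X_1,\dots,X_k)$ with $X_i\in\operatorname{Gr}(n_i,r_i)$, $i=1,\dots,k$, to be minimized. Let $X_i(t)$ be the geodesics defined by tangents $\Delta_i\in\mathbf{T}_{X_i}$, with corresponding parallel transported tangent space basis matrices $Y_i(t)=T_{X_i,\Delta_i}(t)Y_i$, where $[X_i\;Y_i]$ is orthogonal. When tangents and operators are expressed in local coordinates in these bases, the BFGS update of the Hessian approximation on the product of Grassmannians, \[ \mathcal{H}_{+}=\mathcal{H}-\frac{\langle\mathcal{H},S\rangle\otimes\langle\mathcal{H},S\rangle}{\langle\langle\mathcal{H},S\rangle,S\rangle}+\frac{Y\otimes Y}{\langle S,Y\rangle}, \] has the same optimality properties as the BFGS update for a function with variables in a Euclidean space, i.e. it is the least change update of the current Hessian approximation that satisfies the secant equation.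
   Context: Points of $\operatorname{Gr}(n,r)$ are $n\times r$ matrices with orthonormal columns; $\mathbf{T}_X=\{\Delta: X^{\mathsf{T}}\Delta=0\}$ with inner product $\operatorname{tr}(\Delta_1^{\mathsf{T}}\Delta_2)$; in the basis $Y$ (with $[X\;Y]$ orthogonal) a tangent $\Delta=YD$ has local coordinates $D=Y^{\mathsf{T}}\Delta$. For thin SVD $\Delta=U\Sigma V^{\mathsf{T}}$ the geodesic is $X(t)=[XV\;U]\begin{bmatrix}\cos\Sigma t\\ \sin\Sigma t\end{bmatrix}V^{\mathsf{T}}$ and the transport matrix is $T_{X,\Delta}(t)=[XV\;U]\begin{bmatrix}-\sin\Sigma t\\ \cos\Sigma t\end{bmatrix}U^{\mathsf{T}}+(I-UU^{\mathsf{T}})$. The Grassmann gradient of $f$ in the $i$th variable is $\Pi_{X_i}\partial f/\partial X_i$ with $\Pi_{X_i}=I-X_iX_i^{\mathsf{T}}$. In a quasi-Newton step from $(X_1,\dots,X_k)$ with search direction $(\Delta_1,\dots,\Delta_k)$ and step length $t_k$, one sets $S=(S_1,\dots,S_k)$, $S_i=t_kT_{X_i,\Delta_i}(t_k)\Delta_i$, and $Y=(Y^{(1)},\dots,Y^{(k)})$ with $Y^{(i)}$ the gradient component at the new point minus the transported ($T_{X_i,\Delta_i}(t_k)$) gradient component at the old point; in local coordinates these are expressed in the bases $Y_i(t_k)$. The Hessian approximation $\mathcal{H}$ is a linear operator on $\mathbf{T}_{X_1}\times\dots\times\mathbf{T}_{X_k}$ (block form with blocks $\mathcal{H}_{ij}:\mathbf{T}_{X_j}\to\mathbf{T}_{X_i}$);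 $\langle\mathcal{H},S\rangle$ denotes its action on $S$, $\langle S,Y\rangle=\sum_i\langle S_i,Y^{(i)}\rangle$, and $\Delta\otimes\Gamma$ for tuples is the block operator with blocks $\Delta_i\otimes\Gamma_j$ (i.e. $\Gamma\mapsto$ the rank-one operator $Z\mapsto\langle\Gamma,Z\rangle\Delta$ blockwise). Euclidean BFGS optimality (as meant here): for $s\neq 0$, $y$ with $y^{\mathsf{T}}s>0$ and $H=LL^{\mathsf{T}}$ ($L$ invertible), the BFGS update $H_+=H-\frac{Hss^{\mathsf{T}}H}{s^{\mathsf{T}}Hs}+\frac{yy^{\mathsf{T}}}{y^{\mathsf{T}}s}$ satisfies $H_+s=y$, is symmetric positive definite, and equals $L_+L_+^{\mathsf{T}}$ where $L_+$ is the Frobenius-nearest matrix to $L$ mapping $v$ to $y$, with $v=\alpha L^{\mathsf{T}}s$, $\alpha^2=y^{\mathsf{T}}s/s^{\mathsf{T}}Hs$. *)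

theory Defs
  imports Complex_Main "Jordan_Normal_Form.Matrix"
begin

definition mtrace :: "real mat \<Rightarrow> real" where
  "mtrace A = (\<Sum>j<dim_row A. A $$ (j, j))"

definition mcat :: "real mat \<Rightarrow> real mat \<Rightarrow> real mat" where
  "mcat A B = mat (dim_row A) (dim_col A + dim_col B)
     (\<lambda>(a, b). if b < dim_col A then A $$ (a, b) else B $$ (a, b - dim_col A))"

definition orthogonal_mat :: "real mat \<Rightarrow> bool" where
  "orthogonal_mat Q \<longleftrightarrow> dim_row Q = dim_col Q \<and>
     Q\<^sup>T * Q = 1\<^sub>m (dim_col Q) \<and> Q * Q\<^sup>T = 1\<^sub>m (dim_row Q)"

definition diag_fun :: "(real \<Rightarrow> real) \<Rightarrow> real mat \<Rightarrow> real mat" where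
  "diag_fun g D = mat (dim_row D) (dim_col D) (\<lambda>(a, b). if a = b then g (D $$ (a, a)) else 0)"

(* geodesic X(t) = [XV U] [cos(Sigma t); sin(Sigma t)] V^T *)
definition grass_geod :: "real mat \<Rightarrow> real mat \<Rightarrow> real mat \<Rightarrow> real mat \<Rightarrow> real \<Rightarrow> real mat" where
  "grass_geod X U Sig V t =
     (X * V * diag_fun (\<lambda>s. cos (s * t)) Sig + U * diag_fun (\<lambda>s. sin (s * t)) Sig) * V\<^sup>T"

(* transport matrix T(t) = [XV U] [-sin(Sigma t); cos(Sigma t)] U^T + (I - U U^T) *)
definition grass_transp :: "real mat \<Rightarrow> real mat \<Rightarrow> real mat \<Rightarrow> real mat \<Rightarrow> real \<Rightarrow> real mat" where
  "grass_transp X U Sig V t =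
     (X * V * (- diag_fun (\<lambda>s. sin (s * t)) Sig) + U * diag_fun (\<lambda>s. cos (s * t)) Sig) * U\<^sup>T
     + (1\<^sub>m (dim_row X) - U * U\<^sup>T)"

definition grass_proj :: "real mat \<Rightarrow> real mat" where
  "grass_proj X = 1\<^sub>m (dim_row X) - X * X\<^sup>T"

definition tinner :: "nat \<Rightarrow> (nat \<Rightarrow> real mat) \<Rightarrow> (nat \<Rightarrow> real mat) \<Rightarrow> real" where
  "tinner k A B = (\<Sum>i<k. mtrace ((A i)\<^sup>T * B i))"

(* BFGS update on the product of tangent spaces:
   H+ = H - <H,S> (x) <H,S> / <<H,S>,S> + Y (x) Y / <S,Y>,
   with (Delta (x) Gamma) Z = <Gamma,Z> Delta *)
definition bfgs_tangent_update ::
  "nat \<Rightarrow> ((nat \<Rightarrow> real mat) \<Rightarrow> (nat \<Rightarrow> real mat)) \<Rightarrow> (nat \<Rightarrow> real mat) \<Rightarrow> (nat \<Rightarrow> real mat)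
   \<Rightarrow> (nat \<Rightarrow> real mat) \<Rightarrow> (nat \<Rightarrow> real mat)" where
  "bfgs_tangent_update k H S Y Z = (\<lambda>i.
      H Z i - (tinner k (H S) Z / tinner k (H S) S) \<cdot>\<^sub>m H S i
            + (tinner k Y Z / tinner k S Y) \<cdot>\<^sub>m Y i)"

(* index set of local coordinates: block i, entry (a,b) of the (n_i - r_i) x r_i matrix D_i *)
type_synonym cidx = "nat \<times> nat \<times> nat"

definition coord_idx :: "nat \<Rightarrow> (nat \<Rightarrow> nat) \<Rightarrow> (nat \<Rightarrow> nat) \<Rightarrow> cidx set" where
  "coord_idx k n r = {(i, a, b). i < k \<and> a < n i - r i \<and> b < r i}"

definition coord :: "(nat \<Rightarrow> real mat) \<Rightarrow> (nat \<Rightarrow> real mat) \<Rightarrow> cidx \<Rightarrow> real" where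
  "coord Yb Z = (\<lambda>(i, a, b). ((Yb i)\<^sup>T * Z i) $$ (a, b))"

definition lift :: "(nat \<Rightarrow> nat) \<Rightarrow> (nat \<Rightarrow> nat) \<Rightarrow> (nat \<Rightarrow> real mat) \<Rightarrow> (cidx \<Rightarrow> real) \<Rightarrow> nat \<Rightarrow> real mat" where
  "lift n r Yb d = (\<lambda>i. Yb i * mat (n i - r i) (r i) (\<lambda>(a, b). d (i, a, b)))"

definition cmv :: "cidx set \<Rightarrow> (cidx \<Rightarrow> cidx \<Rightarrow> real) \<Rightarrow> (cidx \<Rightarrow> real) \<Rightarrow> cidx \<Rightarrow> real" where
  "cmv I M v = (\<lambda>p. \<Sum>q\<in>I. M p q * v q)"

definition cinner :: "cidx set \<Rightarrow> (cidx \<Rightarrow> real) \<Rightarrow> (cidx \<Rightarrow> real) \<Rightarrow> real" where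
  "cinner I u v = (\<Sum>p\<in>I. u p * v p)"

definition ctransp :: "(cidx \<Rightarrow> cidx \<Rightarrow> real) \<Rightarrow> cidx \<Rightarrow> cidx \<Rightarrow> real" where
  "ctransp M = (\<lambda>p q. M q p)"

definition cmm :: "cidx set \<Rightarrow> (cidx \<Rightarrow> cidx \<Rightarrow> real) \<Rightarrow> (cidx \<Rightarrow> cidx \<Rightarrow> real) \<Rightarrow> cidx \<Rightarrow> cidx \<Rightarrow> real" where
  "cmm I A B = (\<lambda>p q. \<Sum>m\<in>I. A p m * B m q)"

definition cfrob :: "cidx set \<Rightarrow> (cidx \<Rightarrow> cidx \<Rightarrow> real) \<Rightarrow> real" where
  "cfrob I M = sqrt (\<Sum>p\<in>I. \<Sum>q\<in>I. (M p q)\<^sup>2)"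

definition cinvertible :: "cidx set \<Rightarrow> (cidx \<Rightarrow> cidx \<Rightarrow> real) \<Rightarrow> bool" where
  "cinvertible I L \<longleftrightarrow> (\<exists>Li. \<forall>p\<in>I. \<forall>q\<in>I.
      cmm I L Li p q = (if p = q then 1 else 0) \<and> cmm I Li L p q = (if p = q then 1 else 0))"

(* Euclidean BFGS optimality properties of Hp as update of H = L L^T for the pair (s, y):
   secant equation, symmetric positive definite, and Hp = L+ L+^T where L+ is the
   (unique) Frobenius-nearest matrix to L mapping v = alpha L^T s to y,
   alpha^2 = y^T s / s^T H s. *)
definition bfgs_optimal ::
  "cidx set \<Rightarrow> (cidx \<Rightarrow> cidx \<Rightarrow> real) \<Rightarrow> (cidx \<Rightarrow> cidx \<Rightarrow> real) \<Rightarrow> (cidx \<Rightarrow> real) \<Rightarrow> (cidx \<Rightarrow> real)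
   \<Rightarrow> (cidx \<Rightarrow> cidx \<Rightarrow> real) \<Rightarrow> bool" where
  "bfgs_optimal I H L s y Hp \<longleftrightarrow>
     (let alpha = sqrt (cinner I y s / cinner I s (cmv I H s));
          v = (\<lambda>p. alpha * cmv I (ctransp L) s p)
      in (\<forall>p\<in>I. cmv I Hp s p = y p)
       \<and> (\<forall>p\<in>I. \<forall>q\<in>I. Hp p q = Hp q p)
       \<and> (\<forall>w. (\<exists>p\<in>I. w p \<noteq> 0) \<longrightarrow> cinner I w (cmv I Hp w) > 0)
       \<and> (\<exists>Lp. (\<forall>p\<in>I. cmv I Lp v p = y p)
             \<and> (\<forall>M. (\<forall>p\<in>I. cmv I M v p = y p) \<and> (\<exists>p\<in>I. \<exists>q\<in>I. M p q \<noteq> Lp p q)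
                    \<longrightarrow> cfrob I (\<lambda>p q. Lp p q - L p q) < cfrob I (\<lambda>p q. M p q - L p q))
             \<and> (\<forall>p\<in>I. \<forall>q\<in>I. Hp p q = cmm I Lp (ctransp Lp) p q)))"

end

theory Submission
  imports Defs
begin

lemma quad_form:
  fixes I :: "cidx set" and A :: "cidx \<Rightarrow> cidx \<Rightarrow> real"
  assumes fin: "finite I"
  shows "(\<Sum>p\<in>I. w p * (\<Sum>q\<in>I. cmm I A (ctransp A) p q * w q)) = (\<Sum>m\<in>I. (\<Sum>p\<in>I. A p m * w p)\<^sup>2)"
proof -
  have "(\<Sum>p\<in>I. w p * (\<Sum>q\<in>I. cmm I A (ctransp A) p q * w q))
      = (\<Sum>p\<in>I. \<Sum>q\<in>I. \<Sum>m\<in>I. (A p m * w p) * (A q m * w q))"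
    unfolding cmm_def ctransp_def
    by (simp add: sum_distrib_left sum_distrib_right mult_ac)
  also have "\<dots> = (\<Sum>p\<in>I. \<Sum>m\<in>I. \<Sum>q\<in>I. (A p m * w p) * (A q m * w q))"
    by (rule sum.cong[OF refl], rule sum.swap)
  also have "\<dots> = (\<Sum>m\<in>I. \<Sum>p\<in>I. \<Sum>q\<in>I. (A p m * w p) * (A q m * w q))"
    by (rule sum.swap)
  also have "\<dots> = (\<Sum>m\<in>I. (\<Sum>p\<in>I. A p m * w p)\<^sup>2)"
    by (simp add: power2_eq_square sum_product)
  finally show ?thesis .
qed

lemma inv_inj:
  fixes I :: "cidx set" and L :: "cidx \<Rightarrow> cidx \<Rightarrow> real"
  assumes fin: "finite I" and inv: "cinvertible I L"
    and z: "\<forall>m\<in>I. (\<Sum>p\<in>I. L p m * w p) = 0"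
  shows "\<forall>q\<in>I. w q = 0"
proof
  fix q assume q: "q \<in> I"
  obtain Li where Li: "\<forall>p\<in>I. \<forall>q\<in>I. cmm I L Li p q = (if p = q then 1 else 0)"
    using inv unfolding cinvertible_def by blast
  have "w q = (\<Sum>p\<in>I. if q = p then w p else 0)"
    using q fin by simp
  also have "\<dots> = (\<Sum>p\<in>I. (if p = q then 1 else 0) * w p)"
    by (intro sum.cong) auto
  also have "\<dots> = (\<Sum>p\<in>I. cmm I L Li p q * w p)"
    using Li q by (intro sum.cong) auto
  also have "\<dots> = (\<Sum>p\<in>I. \<Sum>m\<in>I. Li m q * (L p m * w p))"
    unfolding cmm_def by (simp add: sum_distrib_right sum_distrib_left mult_ac)
  also have "\<dots> = (\<Sum>m\<in>I. Li m q * (\<Sum>p\<in>I. L p m * w p))"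
    by (subst sum.swap) (simp add: sum_distrib_left)
  also have "\<dots> = 0" using z by simp
  finally show "w q = 0" .
qed

lemma partA:
  fixes I :: "cidx set" and H L Hp :: "cidx \<Rightarrow> cidx \<Rightarrow> real" and s y :: "cidx \<Rightarrow> real"
  assumes fin: "finite I"
    and HLL: "\<forall>p\<in>I. \<forall>q\<in>I. H p q = cmm I L (ctransp L) p q"
    and inv: "cinvertible I L"
    and ys: "cinner I y s > 0"
    and Hp: "\<forall>p\<in>I. \<forall>q\<in>I. Hp p q = H p q - cmv I H s p * cmv I H s q / cinner I s (cmv I H s)
                                   + y p * y q / cinner I y s"
  shows "bfgs_optimal I H L s y Hp"
proof -
  define u where "u m = (\<Sum>p\<in>I. L p m * s p)" for m
  define h where "h = cmv I H s"
  define sHs where "sHs = cinner I s h"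
  define ysv where "ysv = cinner I y s"
  have ysv: "ysv > 0" using ys ysv_def by simp
  have hL: "h p = (\<Sum>m\<in>I. L p m * u m)" if p: "p \<in> I" for p
  proof -
    have "h p = (\<Sum>q\<in>I. (\<Sum>m\<in>I. L p m * L q m) * s q)"
      unfolding h_def cmv_def using HLL p by (intro sum.cong) (auto simp: cmm_def ctransp_def)
    also have "\<dots> = (\<Sum>q\<in>I. \<Sum>m\<in>I. L p m * (L q m * s q))"
      by (simp add: sum_distrib_right sum_distrib_left mult_ac)
    also have "\<dots> = (\<Sum>m\<in>I. L p m * u m)"
      by (subst sum.swap) (simp add: u_def sum_distrib_left)
    finally show ?thesis .
  qed
  have sHs_eq: "sHs = (\<Sum>m\<in>I. (u m)\<^sup>2)"
  proof -
    have "sHs = (\<Sum>p\<in>I. s p * (\<Sum>q\<in>I. cmm I L (ctransp L) p q * s q))"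
      unfolding sHs_def cinner_def h_def cmv_def using HLL by (intro sum.cong refl) simp
    also have "\<dots> = (\<Sum>m\<in>I. (u m)\<^sup>2)" unfolding u_def by (rule quad_form[OF fin])
    finally show ?thesis .
  qed
  obtain p0 where p0: "p0 \<in> I" "s p0 \<noteq> 0"
  proof (rule ccontr)
    assume "\<not> thesis"
    then have "\<forall>p\<in>I. s p = 0" using that by blast
    then have "cinner I y s = 0" unfolding cinner_def by simp
    then show False using ys by simp
  qed
  obtain m0 where m0: "m0 \<in> I" "u m0 \<noteq> 0"
  proof (rule ccontr)
    assume "\<not> thesis"
    then have "\<forall>m\<in>I. (\<Sum>p\<in>I. L p m * s p) = 0" using that unfolding u_def by auto
    then have "\<forall>q\<in>I. s q = 0" by (rule inv_inj[OF fin inv])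
    then show False using p0 by auto
  qed
  have sHs: "sHs > 0" unfolding sHs_eq
    by (rule sum_pos2[OF fin m0(1)]) (use m0 in auto)
  define \<alpha> where "\<alpha> = sqrt (ysv / sHs)"
  have \<alpha>: "\<alpha> > 0" unfolding \<alpha>_def using ysv sHs by simp
  have \<alpha>2: "\<alpha>\<^sup>2 = ysv / sHs" unfolding \<alpha>_def using ysv sHs by simp
  define v where "v = (\<lambda>p. \<alpha> * cmv I (ctransp L) s p)"
  have v: "v m = \<alpha> * u m" for m unfolding v_def u_def cmv_def ctransp_def by simp
  have vv: "cinner I v v = ysv"
  proof -
    have "cinner I v v = \<alpha>\<^sup>2 * sHs" unfolding cinner_def sHs_eq v
      by (simp add: sum_distrib_left power2_eq_square mult_ac)
    then show ?thesis using \<alpha>2 sHs by simp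
  qed
  have Lv: "(\<Sum>m\<in>I. L p m * v m) = \<alpha> * h p" if "p \<in> I" for p
    using hL[OF that] by (simp add: v sum_distrib_left mult_ac)
  define z where "z p = y p - \<alpha> * h p" for p
  define Lp where "Lp p m = L p m + z p * v m / ysv" for p m
  have Hp2: "Hp p q = H p q - h p * h q / sHs + y p * y q / ysv" if "p \<in> I" "q \<in> I" for p q
    using Hp that unfolding h_def sHs_def ysv_def by simp
  have Hsym: "H p q = H q p" if "p \<in> I" "q \<in> I" for p q
    using HLL that unfolding cmm_def ctransp_def by (simp add: mult.commute)
  have hs: "(\<Sum>q\<in>I. h q * s q) = sHs" unfolding sHs_def cinner_def by (simp add: mult.commute)
  have ys2: "(\<Sum>q\<in>I. y q * s q) = ysv" unfolding ysv_def cinner_def by simp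
  have sec: "cmv I Hp s p = y p" if p: "p \<in> I" for p
  proof -
    have "cmv I Hp s p = (\<Sum>q\<in>I. H p q * s q) - h p / sHs * (\<Sum>q\<in>I. h q * s q)
                          + y p / ysv * (\<Sum>q\<in>I. y q * s q)"
    proof -
      have "cmv I Hp s p = (\<Sum>q\<in>I. H p q * s q - h p / sHs * (h q * s q) + y p / ysv * (y q * s q))"
        unfolding cmv_def by (intro sum.cong refl, subst Hp2[OF p], assumption, simp add: algebra_simps)
      then show ?thesis by (simp add: sum_distrib_left sum_subtractf sum.distrib)
    qed
    also have "\<dots> = y p" using hs ys2 sHs ysv by (simp add: h_def cmv_def)
    finally show ?thesis .
  qed
  have sym: "Hp p q = Hp q p" if "p \<in> I" "q \<in> I" for p q
    using Hp2[OF that] Hp2[OF that(2,1)] Hsym[OF that] by (simp add: mult.commute)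
  have Lpv: "cmv I Lp v p = y p" if "p \<in> I" for p
  proof -
    have "cmv I Lp v p = (\<Sum>m\<in>I. L p m * v m) + z p / ysv * cinner I v v"
      unfolding cmv_def Lp_def cinner_def
      by (simp add: algebra_simps sum.distrib sum_distrib_left power2_eq_square)
    then show ?thesis using Lv[OF that] vv ysv by (simp add: z_def)
  qed
  have LpLp: "Hp p q = cmm I Lp (ctransp Lp) p q" if pq: "p \<in> I" "q \<in> I" for p q
  proof -
    have "cmm I Lp (ctransp Lp) p q = (\<Sum>m\<in>I. L p m * L q m)
          + z q / ysv * (\<Sum>m\<in>I. L p m * v m) + z p / ysv * (\<Sum>m\<in>I. L q m * v m)
          + z p * z q / ysv\<^sup>2 * cinner I v v"
      unfolding cmm_def ctransp_def Lp_def cinner_def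
      by (simp add: algebra_simps sum.distrib sum_distrib_left power2_eq_square sum_divide_distrib)
    also have "\<dots> = H p q + (\<alpha> * z q * h p + \<alpha> * z p * h q + z p * z q) / ysv"
      using Lv[OF pq(1)] Lv[OF pq(2)] vv ysv HLL pq
      by (simp add: cmm_def ctransp_def power2_eq_square field_simps)
    also have "\<alpha> * z q * h p + \<alpha> * z p * h q + z p * z q = y p * y q - \<alpha>\<^sup>2 * h p * h q"
      unfolding z_def by (simp add: algebra_simps power2_eq_square)
    also have "H p q + (y p * y q - \<alpha>\<^sup>2 * h p * h q) / ysv = Hp p q"
    proof -
      have e: "\<alpha>\<^sup>2 * h p * h q / ysv = h p * h q / sHs" using \<alpha>2 ysv sHs by (simp add: field_simps)
      show ?thesis using Hp2[OF pq] e by (simp add: diff_divide_distrib)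
    qed
    finally show ?thesis by simp
  qed
  have posdef: "cinner I w (cmv I Hp w) > 0" if w: "\<exists>p\<in>I. w p \<noteq> 0" for w
  proof -
    have eq: "cinner I w (cmv I Hp w) = (\<Sum>m\<in>I. (\<Sum>p\<in>I. Lp p m * w p)\<^sup>2)"
    proof -
      have "cinner I w (cmv I Hp w) = (\<Sum>p\<in>I. w p * (\<Sum>q\<in>I. cmm I Lp (ctransp Lp) p q * w q))"
        unfolding cinner_def cmv_def using LpLp by (intro sum.cong refl) simp
      also have "\<dots> = (\<Sum>m\<in>I. (\<Sum>p\<in>I. Lp p m * w p)\<^sup>2)" by (rule quad_form[OF fin])
      finally show ?thesis .
    qed
    have "\<exists>m\<in>I. (\<Sum>p\<in>I. Lp p m * w p) \<noteq> 0"
    proof (rule ccontr)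
      assume "\<not> ?thesis"
      then have Z: "\<forall>m\<in>I. (\<Sum>p\<in>I. Lp p m * w p) = 0" by blast
      define c where "c = cinner I z w / ysv"
      have "\<forall>m\<in>I. (\<Sum>p\<in>I. L p m * (w p + c * \<alpha> * s p)) = 0"
      proof
        fix m assume m: "m \<in> I"
        have "(\<Sum>p\<in>I. Lp p m * w p) = (\<Sum>p\<in>I. L p m * w p) + c * v m"
          unfolding Lp_def c_def cinner_def
          by (simp add: algebra_simps sum.distrib sum_distrib_left sum_divide_distrib)
        then show "(\<Sum>p\<in>I. L p m * (w p + c * \<alpha> * s p)) = 0"
          using Z m by (simp add: v u_def algebra_simps sum.distrib sum_distrib_left)
      qed
      from inv_inj[OF fin inv this] have wc: "\<forall>p\<in>I. w p = - (c * \<alpha>) * s p" by auto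
      have zs: "cinner I z s = ysv - \<alpha> * sHs"
        unfolding z_def cinner_def sHs_def ysv_def
        by (simp add: algebra_simps sum_subtractf sum_distrib_left)
      have "cinner I z w = - (c * \<alpha>) * cinner I z s"
        unfolding cinner_def using wc by (simp add: sum_distrib_left algebra_simps)
      then have "c * ysv = - (c * \<alpha>) * (ysv - \<alpha> * sHs)" using zs ysv unfolding c_def by simp
      then have "c * ysv = - (c * \<alpha>) * ysv + c * (\<alpha>\<^sup>2 * sHs)" by (simp add: algebra_simps power2_eq_square)
      also have "\<alpha>\<^sup>2 * sHs = ysv" using \<alpha>2 sHs by simp
      finally have "c * \<alpha> * ysv = 0" by (simp add: algebra_simps)
      then have "c = 0" using \<alpha> ysv by simp
      then have "\<forall>p\<in>I. w p = 0" using wc by simp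
      then show False using w by auto
    qed
    then obtain m1 where m1: "m1 \<in> I" "(\<Sum>p\<in>I. Lp p m1 * w p) \<noteq> 0" by blast
    show ?thesis unfolding eq
      by (rule sum_pos2[OF fin m1(1)]) (use m1 in auto)
  qed
  have frob: "cfrob I (\<lambda>p q. Lp p q - L p q) < cfrob I (\<lambda>p q. M p q - L p q)"
    if M: "\<forall>p\<in>I. cmv I M v p = y p" and ne: "\<exists>p\<in>I. \<exists>q\<in>I. M p q \<noteq> Lp p q" for M
  proof -
    define F where "F p q = M p q - Lp p q" for p q
    have Fv: "(\<Sum>q\<in>I. F p q * v q) = 0" if "p \<in> I" for p
      using M Lpv that unfolding F_def cmv_def by (simp add: algebra_simps sum_subtractf)
    have cross: "(\<Sum>p\<in>I. \<Sum>q\<in>I. (Lp p q - L p q) * F p q) = 0"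
    proof -
      have "(\<Sum>p\<in>I. \<Sum>q\<in>I. (Lp p q - L p q) * F p q) = (\<Sum>p\<in>I. z p / ysv * (\<Sum>q\<in>I. F p q * v q))"
        unfolding Lp_def by (simp add: sum_distrib_left algebra_simps)
      also have "\<dots> = 0" using Fv by simp
      finally show ?thesis .
    qed
    have pos: "(\<Sum>p\<in>I. \<Sum>q\<in>I. (F p q)\<^sup>2) > 0"
    proof -
      obtain p1 q1 where pq1: "p1 \<in> I" "q1 \<in> I" "F p1 q1 \<noteq> 0" using ne F_def by auto
      have "(\<Sum>q\<in>I. (F p1 q)\<^sup>2) > 0" by (rule sum_pos2[OF fin pq1(2)]) (use pq1 in auto)
      then show ?thesis
        by (intro sum_pos2[OF fin pq1(1), where f="\<lambda>p. \<Sum>q\<in>I. (F p q)\<^sup>2"]) (auto intro: sum_nonneg)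
    qed
    have "(\<Sum>p\<in>I. \<Sum>q\<in>I. (M p q - L p q)\<^sup>2)
        = (\<Sum>p\<in>I. \<Sum>q\<in>I. (Lp p q - L p q)\<^sup>2) + 2 * (\<Sum>p\<in>I. \<Sum>q\<in>I. (Lp p q - L p q) * F p q)
          + (\<Sum>p\<in>I. \<Sum>q\<in>I. (F p q)\<^sup>2)"
    proof -
      have "(\<Sum>p\<in>I. \<Sum>q\<in>I. (M p q - L p q)\<^sup>2)
          = (\<Sum>p\<in>I. \<Sum>q\<in>I. (Lp p q - L p q)\<^sup>2 + 2 * ((Lp p q - L p q) * F p q) + (F p q)\<^sup>2)"
        unfolding F_def by (intro sum.cong refl) (simp add: power2_eq_square algebra_simps)
      then show ?thesis by (simp add: sum.distrib sum_distrib_left)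
    qed
    then have "(\<Sum>p\<in>I. \<Sum>q\<in>I. (Lp p q - L p q)\<^sup>2) < (\<Sum>p\<in>I. \<Sum>q\<in>I. (M p q - L p q)\<^sup>2)"
      using cross pos by simp
    then show ?thesis unfolding cfrob_def by simp
  qed
  show ?thesis
    unfolding bfgs_optimal_def Let_def
    apply (fold ysv_def h_def sHs_def)
    apply (fold \<alpha>_def)
    apply (fold v_def)
    using sec sym posdef Lpv frob LpLp by blast
qed


lemma prod_entry:
  fixes A B :: "real mat"
  assumes "A \<in> carrier_mat a n" "B \<in> carrier_mat n b" "p < a" "q < b"
  shows "(A * B) $$ (p, q) = (\<Sum>j<n. A $$ (p, j) * B $$ (j, q))"
  using assms by (simp add: scalar_prod_def lessThan_atLeast0)

lemma diag_sum:
  fixes D :: "real mat"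
  assumes "D \<in> carrier_mat r r" "diagonal_mat D" "p < r"
  shows "(\<Sum>j<r. D $$ (p, j) * f j) = D $$ (p, p) * f p"
proof -
  have "(\<Sum>j<r. D $$ (p, j) * f j) = (\<Sum>j<r. if p = j then D $$ (p, p) * f p else 0)"
    using assms unfolding diagonal_mat_def carrier_mat_def by (intro sum.cong) auto
  then show ?thesis using assms by simp
qed

lemma diag_sum':
  fixes D :: "real mat"
  assumes "D \<in> carrier_mat r r" "diagonal_mat D" "q < r"
  shows "(\<Sum>j<r. f j * D $$ (j, q)) = f q * D $$ (q, q)"
proof -
  have "(\<Sum>j<r. f j * D $$ (j, q)) = (\<Sum>j<r. if q = j then f q * D $$ (q, q) else 0)"
    using assms unfolding diagonal_mat_def carrier_mat_def by (intro sum.cong) auto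
  then show ?thesis using assms by simp
qed

lemma diag_fun_carrier[simp]: "Sig \<in> carrier_mat r r \<Longrightarrow> diag_fun g Sig \<in> carrier_mat r r"
  unfolding diag_fun_def by simp

lemma diag_fun_diag: "diagonal_mat (diag_fun g Sig)"
  unfolding diag_fun_def diagonal_mat_def by simp

lemma diag_fun_idx: "i < dim_row Sig \<Longrightarrow> i < dim_col Sig \<Longrightarrow> diag_fun g Sig $$ (i, i) = g (Sig $$ (i, i))"
  unfolding diag_fun_def by simp

lemma assoc_dim:
  assumes "dim_col (A::real mat) = dim_row B" "dim_col B = dim_row C"
  shows "(A * B) * C = A * (B * C)"
proof -
  have a: "A \<in> carrier_mat (dim_row A) (dim_col A)" unfolding carrier_mat_def by blast
  have b: "B \<in> carrier_mat (dim_col A) (dim_col B)" using assms unfolding carrier_mat_def by simp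
  have c: "C \<in> carrier_mat (dim_col B) (dim_col C)" using assms unfolding carrier_mat_def by simp
  show ?thesis by (rule assoc_mult_mat[OF a b c])
qed

lemma transpose_mult_dim:
  assumes "dim_col (A::real mat) = dim_row B"
  shows "(A * B)\<^sup>T = B\<^sup>T * A\<^sup>T"
proof -
  have a: "A \<in> carrier_mat (dim_row A) (dim_col A)" unfolding carrier_mat_def by blast
  have b: "B \<in> carrier_mat (dim_col A) (dim_col B)" using assms unfolding carrier_mat_def by simp
  show ?thesis by (rule transpose_mult[OF a b])
qed

lemma transp_orth:
  fixes X Yb U Sig V :: "real mat"
  assumes X: "X \<in> carrier_mat n r" and Yb: "Yb \<in> carrier_mat n m" and U: "U \<in> carrier_mat n r"
    and Sig: "Sig \<in> carrier_mat r r" and V: "V \<in> carrier_mat r r"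
    and XX: "X\<^sup>T * X = 1\<^sub>m r" and XY: "X\<^sup>T * Yb = 0\<^sub>m r m" and YY: "Yb\<^sup>T * Yb = 1\<^sub>m m"
    and UU: "U\<^sup>T * U = 1\<^sub>m r" and VV: "V\<^sup>T * V = 1\<^sub>m r"
    and dg: "diagonal_mat Sig" and XUS: "X\<^sup>T * U * Sig = 0\<^sub>m r r"
  shows "(grass_transp X U Sig V t * Yb)\<^sup>T * (grass_transp X U Sig V t * Yb) = 1\<^sub>m m"
proof -
  define W where "W = X * V"
  define Sm where "Sm = diag_fun (\<lambda>s. sin (s * t)) Sig"
  define Cm where "Cm = diag_fun (\<lambda>s. cos (s * t)) Sig"
  define a where "a = U\<^sup>T * Yb"
  define N where "N = X\<^sup>T * U"
  define A where "A = mat r m (\<lambda>(j, p). - (Sm $$ (j, j)) * a $$ (j, p))"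
  define B where "B = mat r m (\<lambda>(j, p). (Cm $$ (j, j) - 1) * a $$ (j, p))"
  have W: "W \<in> carrier_mat n r" unfolding W_def using X V by simp
  have Sm: "Sm \<in> carrier_mat r r" unfolding Sm_def using Sig by simp
  have Cm: "Cm \<in> carrier_mat r r" unfolding Cm_def using Sig by simp
  have a: "a \<in> carrier_mat r m" unfolding a_def using U Yb by simp
  have N: "N \<in> carrier_mat r r" unfolding N_def using U X by simp
  have A: "A \<in> carrier_mat r m" unfolding A_def by simp
  have B: "B \<in> carrier_mat r m" unfolding B_def by simp
  have Smi: "Sm $$ (j, j) = sin (Sig $$ (j, j) * t)" if "j < r" for j
    unfolding Sm_def using that Sig by (simp add: diag_fun_idx)
  have Cmi: "Cm $$ (j, j) = cos (Sig $$ (j, j) * t)" if "j < r" for j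
    unfolding Cm_def using that Sig by (simp add: diag_fun_idx)
  have T: "grass_transp X U Sig V t = (W * (- Sm) + U * Cm) * U\<^sup>T + (1\<^sub>m n - U * U\<^sup>T)"
    unfolding grass_transp_def W_def Sm_def Cm_def using X by simp
  have NC: "N $$ (p, j) * (Cm $$ (j, j) - 1) = 0" if "p < r" "j < r" for p j
  proof -
    have "(N * Sig) $$ (p, j) = N $$ (p, j) * Sig $$ (j, j)"
      using prod_entry[OF N Sig that] diag_sum'[OF Sig dg that(2)] by simp
    then have "N $$ (p, j) * Sig $$ (j, j) = 0" using XUS that unfolding N_def by simp
    then show ?thesis using Cmi[OF that(2)] by auto
  qed
  have NB: "N * B = 0\<^sub>m r m"
  proof (rule eq_matI)
    fix p q assume pq: "p < dim_row (0\<^sub>m r m)" "q < dim_col (0\<^sub>m r m)"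
    then have "(N * B) $$ (p, q) = (\<Sum>j<r. (N $$ (p, j) * (Cm $$ (j, j) - 1)) * a $$ (j, q))"
      using prod_entry[OF N B] unfolding B_def by (simp add: mult_ac)
    also have "\<dots> = 0" using pq by (intro sum.neutral) (auto simp: NC)
    finally show "(N * B) $$ (p, q) = 0\<^sub>m r m $$ (p, q)" using pq by simp
  qed (use N B in auto)
  have mSa: "(- Sm) * a = A"
  proof (rule eq_matI)
    fix p q assume pq: "p < dim_row A" "q < dim_col A"
    then have pq': "p < r" "q < m" using A by auto
    have dS: "diagonal_mat (- Sm)" using Sm diag_fun_diag[of "\<lambda>s. sin (s * t)" Sig]
      unfolding Sm_def diagonal_mat_def by auto
    show "(- Sm * a) $$ (p, q) = A $$ (p, q)"
      using prod_entry[OF uminus_carrier_mat[OF Sm] a pq'] diag_sum[OF uminus_carrier_mat[OF Sm] dS pq'(1)]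
        pq' Sm unfolding A_def by simp
  qed (use A a Sm in auto)
  have Cab: "Cm * a - a = B"
  proof (rule eq_matI)
    fix p q assume pq: "p < dim_row B" "q < dim_col B"
    then have pq': "p < r" "q < m" using B by auto
    have dC: "diagonal_mat Cm" unfolding Cm_def by (rule diag_fun_diag)
    show "(Cm * a - a) $$ (p, q) = B $$ (p, q)"
      using prod_entry[OF Cm a pq'] diag_sum[OF Cm dC pq'(1)] pq' a unfolding B_def
      by (simp add: algebra_simps)
  qed (use B a Cm in auto)
  define P where "P = W * A"
  define Q where "Q = U * B"
  have P: "P \<in> carrier_mat n m" unfolding P_def using W A by simp
  have Q: "Q \<in> carrier_mat n m" unfolding Q_def using U B by simp
  have TY: "grass_transp X U Sig V t * Yb = Yb + P + Q"
  proof -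
    have e1: "((W * (- Sm) + U * Cm) * U\<^sup>T) * Yb = P + U * (Cm * a)"
    proof -
      have "((W * (- Sm) + U * Cm) * U\<^sup>T) * Yb = (W * (- Sm) + U * Cm) * a"
        unfolding a_def using W Sm U Cm Yb by (subst assoc_mult_mat) auto
      also have "\<dots> = W * (- Sm) * a + U * Cm * a"
        using W Sm U Cm a by (subst add_mult_distrib_mat) auto
      also have "\<dots> = P + U * (Cm * a)"
        unfolding P_def mSa[symmetric] using W Sm U Cm a by simp
      finally show ?thesis .
    qed
    have e2: "(1\<^sub>m n - U * U\<^sup>T) * Yb = Yb - U * a"
      unfolding a_def using U Yb by (subst minus_mult_distrib_mat) auto
    have e3: "U * (Cm * a) - U * a = Q"
      unfolding Q_def Cab[symmetric] using U Cm a by (subst mult_minus_distrib_mat) auto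
    have "grass_transp X U Sig V t * Yb = ((W * (- Sm) + U * Cm) * U\<^sup>T) * Yb + (1\<^sub>m n - U * U\<^sup>T) * Yb"
      unfolding T using W Sm U Cm Yb by (subst add_mult_distrib_mat) auto
    also have "\<dots> = P + U * (Cm * a) + (Yb - U * a)" using e1 e2 by simp
    also have "\<dots> = Yb + P + Q"
      unfolding e3[symmetric]
      by (rule eq_matI) (use P U Cm a Yb in auto)
    finally show ?thesis .
  qed
  have YbT: "Yb\<^sup>T \<in> carrier_mat m n" and XT: "X\<^sup>T \<in> carrier_mat r n" and UT: "U\<^sup>T \<in> carrier_mat r n"
    and VT: "V\<^sup>T \<in> carrier_mat r r" and AT: "A\<^sup>T \<in> carrier_mat m r" and BT: "B\<^sup>T \<in> carrier_mat m r"
    and WT: "W\<^sup>T \<in> carrier_mat r n"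
    using Yb X U V A B W by auto
  note dims = carrier_matD[OF X] carrier_matD[OF Yb] carrier_matD[OF U] carrier_matD[OF V]
     carrier_matD[OF A] carrier_matD[OF B] carrier_matD[OF W] carrier_matD[OF N] carrier_matD[OF a]
  have YX: "Yb\<^sup>T * X = 0\<^sub>m m r"
  proof -
    have "Yb\<^sup>T * X = (X\<^sup>T * Yb)\<^sup>T" using X Yb by (simp add: transpose_mult)
    then show ?thesis using XY by simp
  qed
  have i1: "Yb\<^sup>T * P = 0\<^sub>m m m"
  proof -
    have "Yb\<^sup>T * P = (Yb\<^sup>T * X) * (V * A)" unfolding P_def W_def
      using dims by (simp add: transpose_mult_dim assoc_dim)
    then show ?thesis using YX V A by simp
  qed
  have WW: "W\<^sup>T * W = 1\<^sub>m r"
  proof -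
    have "W\<^sup>T * W = V\<^sup>T * (X\<^sup>T * X) * V" unfolding W_def using dims by (simp add: transpose_mult_dim assoc_dim)
    then show ?thesis using XX VV V by simp
  qed
  have i2: "P\<^sup>T * P = A\<^sup>T * A"
  proof -
    have "P\<^sup>T * P = A\<^sup>T * (W\<^sup>T * W) * A" unfolding P_def using dims by (simp add: transpose_mult_dim assoc_dim)
    then show ?thesis using WW A by simp
  qed
  have i3: "Yb\<^sup>T * Q = a\<^sup>T * B"
  proof -
    have "Yb\<^sup>T * Q = (U\<^sup>T * Yb)\<^sup>T * B" unfolding Q_def using dims by (simp add: transpose_mult_dim assoc_dim)
    then show ?thesis unfolding a_def .
  qed
  have i4: "P\<^sup>T * Q = 0\<^sub>m m m"
  proof -
    have "P\<^sup>T * Q = A\<^sup>T * (V\<^sup>T * (N * B))" unfolding P_def Q_def W_def N_def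
      using dims by (simp add: transpose_mult_dim assoc_dim)
    then show ?thesis using NB A V by simp
  qed
  have i5: "Q\<^sup>T * Q = B\<^sup>T * B"
  proof -
    have "Q\<^sup>T * Q = B\<^sup>T * (U\<^sup>T * U) * B" unfolding Q_def using dims by (simp add: transpose_mult_dim assoc_dim)
    then show ?thesis using UU B by simp
  qed
  show ?thesis
  proof (rule eq_matI)
    fix p q assume pq0: "p < dim_row (1\<^sub>m m)" "q < dim_col (1\<^sub>m m)"
    then have pq: "p < m" "q < m" by auto
    have ent: "(M1\<^sup>T * M2) $$ (p, q) = (\<Sum>j<n. M1 $$ (j, p) * M2 $$ (j, q))"
      if "M1 \<in> carrier_mat n m" "M2 \<in> carrier_mat n m" for M1 M2 :: "real mat"
      using that pq by (simp add: scalar_prod_def lessThan_atLeast0)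
    have ent2: "(M1\<^sup>T * M2) $$ (q, p) = (\<Sum>j<n. M2 $$ (j, p) * M1 $$ (j, q))"
      if "M1 \<in> carrier_mat n m" "M2 \<in> carrier_mat n m" for M1 M2 :: "real mat"
      using that pq by (simp add: scalar_prod_def lessThan_atLeast0, intro sum.cong refl, simp add: mult.commute)
    have entr: "(M1\<^sup>T * M2) $$ (p, q) = (\<Sum>j<r. M1 $$ (j, p) * M2 $$ (j, q))"
      if "M1 \<in> carrier_mat r m" "M2 \<in> carrier_mat r m" for M1 M2 :: "real mat"
      using that pq by (simp add: scalar_prod_def lessThan_atLeast0)
    have entr2: "(M1\<^sup>T * M2) $$ (q, p) = (\<Sum>j<r. M2 $$ (j, p) * M1 $$ (j, q))"
      if "M1 \<in> carrier_mat r m" "M2 \<in> carrier_mat r m" for M1 M2 :: "real mat"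
      using that pq by (simp add: scalar_prod_def lessThan_atLeast0, intro sum.cong refl, simp add: mult.commute)
    have YtY: "((Yb + P + Q)\<^sup>T * (Yb + P + Q)) $$ (p, q) =
       (Yb\<^sup>T * Yb) $$ (p, q) + (Yb\<^sup>T * P) $$ (p, q) + (Yb\<^sup>T * P) $$ (q, p) + (P\<^sup>T * P) $$ (p, q)
       + (Yb\<^sup>T * Q) $$ (p, q) + (Yb\<^sup>T * Q) $$ (q, p) + (P\<^sup>T * Q) $$ (p, q) + (P\<^sup>T * Q) $$ (q, p)
       + (Q\<^sup>T * Q) $$ (p, q)"
    proof -
      have YPQ: "Yb + P + Q \<in> carrier_mat n m" using Yb P Q by simp
      have "((Yb + P + Q)\<^sup>T * (Yb + P + Q)) $$ (p, q)
          = (\<Sum>j<n. (Yb $$ (j, p) + P $$ (j, p) + Q $$ (j, p)) * (Yb $$ (j, q) + P $$ (j, q) + Q $$ (j, q)))"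
        unfolding ent[OF YPQ YPQ] using Yb P Q pq by (intro sum.cong refl) (simp add: add.assoc)
      then show ?thesis
        using Yb P Q by (simp add: ent ent2 sum.distrib[symmetric] algebra_simps)
    qed
    have rest: "(A\<^sup>T * A) $$ (p, q) + (a\<^sup>T * B) $$ (p, q) + (a\<^sup>T * B) $$ (q, p) + (B\<^sup>T * B) $$ (p, q) = 0"
    proof -
      have "(A\<^sup>T * A) $$ (p, q) + (a\<^sup>T * B) $$ (p, q) + (a\<^sup>T * B) $$ (q, p) + (B\<^sup>T * B) $$ (p, q)
          = (\<Sum>j<r. A $$ (j, p) * A $$ (j, q)) + (\<Sum>j<r. a $$ (j, p) * B $$ (j, q))
            + (\<Sum>j<r. B $$ (j, p) * a $$ (j, q)) + (\<Sum>j<r. B $$ (j, p) * B $$ (j, q))"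
        by (simp add: entr[OF A A] entr[OF a B] entr2[OF a B] entr[OF B B])
      also have "\<dots> = (\<Sum>j<r. A $$ (j, p) * A $$ (j, q) + a $$ (j, p) * B $$ (j, q)
            + B $$ (j, p) * a $$ (j, q) + B $$ (j, p) * B $$ (j, q))"
        by (simp add: sum.distrib)
      also have "\<dots> = (\<Sum>j<r. 0)"
      proof (intro sum.cong refl)
        fix j assume j: "j \<in> {..<r}"
        have e: "sin (t * Sig $$ (j, j)) * sin (t * Sig $$ (j, j)) = 1 - cos (t * Sig $$ (j, j)) * cos (t * Sig $$ (j, j))"
          using sin_cos_squared_add[of "t * Sig $$ (j, j)"] by (simp add: power2_eq_square)
        show "A $$ (j, p) * A $$ (j, q) + a $$ (j, p) * B $$ (j, q)
            + B $$ (j, p) * a $$ (j, q) + B $$ (j, p) * B $$ (j, q) = 0"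
          using pq j by (simp add: A_def B_def Smi Cmi algebra_simps) (simp add: e algebra_simps)
      qed
      also have "\<dots> = 0" by simp
      finally show ?thesis .
    qed
    show "((grass_transp X U Sig V t * Yb)\<^sup>T * (grass_transp X U Sig V t * Yb)) $$ (p, q) = 1\<^sub>m m $$ (p, q)"
      unfolding TY YtY i1 i2 i3 i4 i5 YY using pq rest by simp
  qed (use TY Yb P Q in auto)
qed


lemma sum_split_add: "(\<Sum>j<(r::nat)+m. f j) = (\<Sum>j<r. f j) + (\<Sum>j<m. (f (r + j)::real))"
  by (induction m) (simp_all add: add.assoc)

lemma mcat_facts:
  fixes X Yb :: "real mat"
  assumes X: "X \<in> carrier_mat n r" and Yb: "Yb \<in> carrier_mat n m" and nm: "r + m = n"
    and orth: "orthogonal_mat (mcat X Yb)"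
  shows "X\<^sup>T * X = 1\<^sub>m r" "X\<^sup>T * Yb = 0\<^sub>m r m" "Yb\<^sup>T * Yb = 1\<^sub>m m" "X * X\<^sup>T + Yb * Yb\<^sup>T = 1\<^sub>m n"
proof -
  define Q where "Q = mcat X Yb"
  have Q: "Q \<in> carrier_mat n n" unfolding Q_def mcat_def using X Yb nm by auto
  have Qi: "Q $$ (a, b) = (if b < r then X $$ (a, b) else Yb $$ (a, b - r))" if "a < n" "b < n" for a b
    unfolding Q_def mcat_def using X Yb nm that by auto
  have QQ: "Q\<^sup>T * Q = 1\<^sub>m n" "Q * Q\<^sup>T = 1\<^sub>m n" using orth Q unfolding orthogonal_mat_def Q_def by auto
  have QtQ: "(\<Sum>j<n. Q $$ (j, p) * Q $$ (j, q)) = (if p = q then 1 else 0)" if "p < n" "q < n" for p q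
    using prod_entry[of "Q\<^sup>T" n n Q n p q] QQ(1) Q that by simp
  have QQt: "(\<Sum>j<n. Q $$ (p, j) * Q $$ (q, j)) = (if p = q then 1 else 0)" if "p < n" "q < n" for p q
    using prod_entry[of Q n n "Q\<^sup>T" n p q] QQ(2) Q that by simp
  show "X\<^sup>T * X = 1\<^sub>m r"
  proof (rule eq_matI)
    fix p q assume pq: "p < dim_row (1\<^sub>m r)" "q < dim_col (1\<^sub>m r)"
    then have "(X\<^sup>T * X) $$ (p, q) = (\<Sum>j<n. Q $$ (j, p) * Q $$ (j, q))"
      using prod_entry[of "X\<^sup>T" r n X r p q] X nm by (simp add: Qi)
    then show "(X\<^sup>T * X) $$ (p, q) = 1\<^sub>m r $$ (p, q)" using QtQ pq nm by simp
  qed (use X in auto)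
  show "X\<^sup>T * Yb = 0\<^sub>m r m"
  proof (rule eq_matI)
    fix p q assume pq: "p < dim_row (0\<^sub>m r m)" "q < dim_col (0\<^sub>m r m)"
    then have "(X\<^sup>T * Yb) $$ (p, q) = (\<Sum>j<n. Q $$ (j, p) * Q $$ (j, r + q))"
      using prod_entry[of "X\<^sup>T" r n Yb m p q] X Yb nm by (simp add: Qi)
    then show "(X\<^sup>T * Yb) $$ (p, q) = 0\<^sub>m r m $$ (p, q)" using QtQ[of p "r + q"] pq nm by simp
  qed (use X Yb in auto)
  show "Yb\<^sup>T * Yb = 1\<^sub>m m"
  proof (rule eq_matI)
    fix p q assume pq: "p < dim_row (1\<^sub>m m)" "q < dim_col (1\<^sub>m m)"
    then have "(Yb\<^sup>T * Yb) $$ (p, q) = (\<Sum>j<n. Q $$ (j, r + p) * Q $$ (j, r + q))"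
      using prod_entry[of "Yb\<^sup>T" m n Yb m p q] Yb nm by (simp add: Qi)
    then show "(Yb\<^sup>T * Yb) $$ (p, q) = 1\<^sub>m m $$ (p, q)" using QtQ[of "r + p" "r + q"] pq nm by simp
  qed (use Yb in auto)
  show "X * X\<^sup>T + Yb * Yb\<^sup>T = 1\<^sub>m n"
  proof (rule eq_matI)
    fix p q assume pq: "p < dim_row (1\<^sub>m n)" "q < dim_col (1\<^sub>m n)"
    then have pq': "p < n" "q < n" by auto
    have "(X * X\<^sup>T + Yb * Yb\<^sup>T) $$ (p, q) = (X * X\<^sup>T) $$ (p, q) + (Yb * Yb\<^sup>T) $$ (p, q)"
      using pq' X Yb by simp
    also have "\<dots> = (\<Sum>j<r. X $$ (p, j) * X $$ (q, j)) + (\<Sum>j<m. Yb $$ (p, j) * Yb $$ (q, j))"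
      using prod_entry[of X n r "X\<^sup>T" n p q] prod_entry[of Yb n m "Yb\<^sup>T" n p q] pq' X Yb by simp
    also have "\<dots> = (\<Sum>j<r. Q $$ (p, j) * Q $$ (q, j)) + (\<Sum>j<m. Q $$ (p, r + j) * Q $$ (q, r + j))"
      using pq' nm by (simp add: Qi)
    also have "\<dots> = (\<Sum>j<n. Q $$ (p, j) * Q $$ (q, j))"
      using sum_split_add[of "\<lambda>j. Q $$ (p, j) * Q $$ (q, j)" r m] nm by simp
    also have "\<dots> = 1\<^sub>m n $$ (p, q)" using QQt pq' by simp
    finally show "(X * X\<^sup>T + Yb * Yb\<^sup>T) $$ (p, q) = 1\<^sub>m n $$ (p, q)" .
  qed (use X Yb in auto)
qed



lemma sum_I: "finite (coord_idx k n r) \<and>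
  (\<Sum>p\<in>coord_idx k n r. f p) = (\<Sum>i<k. \<Sum>a<n i - r i. \<Sum>b<r i. f (i, a, b))"
proof -
  have e: "coord_idx k n r = Sigma {..<k} (\<lambda>i. {..<n i - r i} \<times> {..<r i})"
    unfolding coord_idx_def by auto
  have "(\<Sum>i<k. \<Sum>a<n i - r i. \<Sum>b<r i. f (i, a, b)) = (\<Sum>i<k. \<Sum>ab\<in>{..<n i - r i} \<times> {..<r i}. f (i, ab))"
    by (intro sum.cong refl) (simp add: sum.cartesian_product)
  also have "\<dots> = (\<Sum>p\<in>coord_idx k n r. f p)" unfolding e
    using sum.Sigma[of "{..<k}" "\<lambda>i. {..<n i - r i} \<times> {..<r i}" "\<lambda>i ab. f (i, ab)"] by simp
  finally show ?thesis unfolding e by auto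
qed

lemma mtrace_frob:
  fixes D G :: "real mat"
  assumes "D \<in> carrier_mat a b" "G \<in> carrier_mat a b"
  shows "mtrace (D\<^sup>T * G) = (\<Sum>x<a. \<Sum>y<b. D $$ (x, y) * G $$ (x, y))"
proof -
  have "mtrace (D\<^sup>T * G) = (\<Sum>y<b. \<Sum>x<a. D $$ (x, y) * G $$ (x, y))"
    unfolding mtrace_def using assms
    by (intro sum.cong) (auto simp: scalar_prod_def lessThan_atLeast0)
  then show ?thesis by (simp add: sum.swap[of _ "{..<b}"])
qed

lemma tinner_sym:
  assumes "\<forall>i<k. A i \<in> carrier_mat (n i) (r i) \<and> B i \<in> carrier_mat (n i) (r i)"
  shows "tinner k A B = tinner k B A"
  unfolding tinner_def
proof (intro sum.cong refl)
  fix i assume "i \<in> {..<k}"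
  then have c: "A i \<in> carrier_mat (n i) (r i)" "B i \<in> carrier_mat (n i) (r i)" using assms by auto
  show "mtrace ((A i)\<^sup>T * B i) = mtrace ((B i)\<^sup>T * A i)"
    unfolding mtrace_frob[OF c] mtrace_frob[OF c(2,1)] by (simp add: mult.commute)
qed

lemma tinner_lift:
  assumes Yt: "\<forall>i<k. Yt i \<in> carrier_mat (n i) (n i - r i)"
    and Z: "\<forall>i<k. Z i \<in> carrier_mat (n i) (r i)"
  shows "tinner k (lift n r Yt u) Z = cinner (coord_idx k n r) u (coord Yt Z)"
proof -
  have "tinner k (lift n r Yt u) Z = (\<Sum>i<k. \<Sum>a<n i - r i. \<Sum>b<r i. u (i, a, b) * coord Yt Z (i, a, b))"
    unfolding tinner_def
  proof (intro sum.cong refl)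
    fix i assume i: "i \<in> {..<k}"
    define Dm where "Dm = mat (n i - r i) (r i) (\<lambda>(a, b). u (i, a, b))"
    have Dm: "Dm \<in> carrier_mat (n i - r i) (r i)" unfolding Dm_def by simp
    have Yti: "Yt i \<in> carrier_mat (n i) (n i - r i)" and Zi: "Z i \<in> carrier_mat (n i) (r i)"
      using Yt Z i by auto
    have "(lift n r Yt u i)\<^sup>T * Z i = Dm\<^sup>T * ((Yt i)\<^sup>T * Z i)"
      unfolding lift_def Dm_def[symmetric] using Yti Dm Zi
      by (simp add: transpose_mult_dim assoc_dim)
    then have "mtrace ((lift n r Yt u i)\<^sup>T * Z i)
        = (\<Sum>a<n i - r i. \<Sum>b<r i. Dm $$ (a, b) * ((Yt i)\<^sup>T * Z i) $$ (a, b))"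
      using mtrace_frob[OF Dm, of "(Yt i)\<^sup>T * Z i"] Yti Zi by simp
    also have "\<dots> = (\<Sum>a<n i - r i. \<Sum>b<r i. u (i, a, b) * coord Yt Z (i, a, b))"
      unfolding Dm_def coord_def by simp
    finally show "mtrace ((lift n r Yt u i)\<^sup>T * Z i) = (\<Sum>a<n i - r i. \<Sum>b<r i. u (i, a, b) * coord Yt Z (i, a, b))" .
  qed
  also have "\<dots> = cinner (coord_idx k n r) u (coord Yt Z)"
    unfolding cinner_def using sum_I[of k n r "\<lambda>p. u p * coord Yt Z p"] by simp
  finally show ?thesis .
qed

lemma coord_lift:
  assumes Yt: "Yt i \<in> carrier_mat (n i) (n i - r i)" and O: "(Yt i)\<^sup>T * Yt i = 1\<^sub>m (n i - r i)"
    and a: "a < n i - r i" and b: "b < r i"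
  shows "coord Yt (lift n r Yt d) (i, a, b) = d (i, a, b)"
proof -
  define Dm where "Dm = mat (n i - r i) (r i) (\<lambda>(a, b). d (i, a, b))"
  have Dm: "Dm \<in> carrier_mat (n i - r i) (r i)" unfolding Dm_def by simp
  have "(Yt i)\<^sup>T * (Yt i * Dm) = Dm"
    using Yt Dm O by (simp add: assoc_dim[symmetric])
  then show ?thesis unfolding coord_def lift_def Dm_def[symmetric] using a b by (simp add: Dm_def)
qed

lemma grass_transp_carrier:
  assumes "X \<in> carrier_mat n r" "U \<in> carrier_mat n r" "Sig \<in> carrier_mat r r" "V \<in> carrier_mat r r"
  shows "grass_transp X U Sig V t \<in> carrier_mat n n"
proof -
  have UT: "U\<^sup>T \<in> carrier_mat r n" using assms by simp
  have "X * V * (- diag_fun (\<lambda>s. sin (s * t)) Sig) + U * diag_fun (\<lambda>s. cos (s * t)) Sig \<in> carrier_mat n r"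
    using assms by (intro add_carrier_mat mult_carrier_mat) auto
  then have "(X * V * (- diag_fun (\<lambda>s. sin (s * t)) Sig) + U * diag_fun (\<lambda>s. cos (s * t)) Sig) * U\<^sup>T \<in> carrier_mat n n"
    using UT by (rule mult_carrier_mat)
  have "1\<^sub>m (dim_row X) - U * U\<^sup>T \<in> carrier_mat n n"
    using assms UT by (intro minus_carrier_mat mult_carrier_mat) auto
  then show ?thesis unfolding grass_transp_def by (rule add_carrier_mat)
qed

lemma block_facts:
  fixes X Yb Dl U Sig V :: "real mat"
  assumes rn: "r \<le> n" and X: "X \<in> carrier_mat n r" and Yb: "Yb \<in> carrier_mat n (n - r)"
    and orth: "orthogonal_mat (mcat X Yb)"
    and Dl: "Dl \<in> carrier_mat n r" and XD: "X\<^sup>T * Dl = 0\<^sub>m r r"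
    and U: "U \<in> carrier_mat n r" and Sig: "Sig \<in> carrier_mat r r" and V: "V \<in> carrier_mat r r"
    and UU: "U\<^sup>T * U = 1\<^sub>m r" and Vo: "orthogonal_mat V" and dg: "diagonal_mat Sig"
    and svd: "Dl = U * Sig * V\<^sup>T"
  shows "grass_transp X U Sig V t * Yb \<in> carrier_mat n (n - r)"
    "(grass_transp X U Sig V t * Yb)\<^sup>T * (grass_transp X U Sig V t * Yb) = 1\<^sub>m (n - r)"
    "t \<cdot>\<^sub>m (grass_transp X U Sig V t * Dl) = (grass_transp X U Sig V t * Yb) * (t \<cdot>\<^sub>m (Yb\<^sup>T * Dl))"
proof -
  have nm: "r + (n - r) = n" using rn by simp
  note mf = mcat_facts[OF X Yb nm orth]
  have T: "grass_transp X U Sig V t \<in> carrier_mat n n" by (rule grass_transp_carrier[OF X U Sig V])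
  show "grass_transp X U Sig V t * Yb \<in> carrier_mat n (n - r)" using T Yb by simp
  have VV: "V\<^sup>T * V = 1\<^sub>m r" using Vo V unfolding orthogonal_mat_def by auto
  note dims = carrier_matD[OF X] carrier_matD[OF Yb] carrier_matD[OF U] carrier_matD[OF V]
    carrier_matD[OF Sig] carrier_matD[OF Dl] carrier_matD[OF T]
  have XUS: "X\<^sup>T * U * Sig = 0\<^sub>m r r"
  proof -
    have "X\<^sup>T * U * Sig = X\<^sup>T * U * Sig * (V\<^sup>T * V)" using VV dims by simp
    also have "\<dots> = (X\<^sup>T * Dl) * V" unfolding svd using dims by (simp add: assoc_dim)
    also have "\<dots> = 0\<^sub>m r r" using XD dims by simp
    finally show ?thesis .
  qed
  show "(grass_transp X U Sig V t * Yb)\<^sup>T * (grass_transp X U Sig V t * Yb) = 1\<^sub>m (n - r)"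
    by (rule transp_orth[OF X Yb U Sig V mf(1) mf(2) mf(3) UU VV dg XUS])
  have DY: "Dl = Yb * (Yb\<^sup>T * Dl)"
  proof -
    have "Dl = (X * X\<^sup>T + Yb * Yb\<^sup>T) * Dl" using mf(4) dims by simp
    also have "\<dots> = X * X\<^sup>T * Dl + Yb * Yb\<^sup>T * Dl"
      by (rule add_mult_distrib_mat[of _ n n]) (use X Yb Dl in auto)
    also have "\<dots> = X * (X\<^sup>T * Dl) + Yb * (Yb\<^sup>T * Dl)"
      using dims by (simp add: assoc_dim)
    also have "\<dots> = Yb * (Yb\<^sup>T * Dl)" using XD X Yb Dl by simp
    finally show ?thesis .
  qed
  have "grass_transp X U Sig V t * Dl = (grass_transp X U Sig V t * Yb) * (Yb\<^sup>T * Dl)"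
    by (subst DY) (use dims in \<open>simp add: assoc_dim\<close>)
  then show "t \<cdot>\<^sub>m (grass_transp X U Sig V t * Dl) = (grass_transp X U Sig V t * Yb) * (t \<cdot>\<^sub>m (Yb\<^sup>T * Dl))"
    using mult_smult_distrib[of "grass_transp X U Sig V t * Yb" n "n - r" "Yb\<^sup>T * Dl" r t] T Yb Dl by simp
qed

lemma coord_lin:
  fixes Yt A B C :: "real mat"
  assumes Yt: "Yt \<in> carrier_mat n m" and A: "A \<in> carrier_mat n r" and B: "B \<in> carrier_mat n r"
    and C: "C \<in> carrier_mat n r" and a: "a < m" and b: "b < r"
  shows "(Yt\<^sup>T * (A - c1 \<cdot>\<^sub>m B + c2 \<cdot>\<^sub>m C)) $$ (a, b)
       = (Yt\<^sup>T * A) $$ (a, b) - c1 * (Yt\<^sup>T * B) $$ (a, b) + c2 * (Yt\<^sup>T * C) $$ (a, b)"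
proof -
  have M: "A - c1 \<cdot>\<^sub>m B + c2 \<cdot>\<^sub>m C \<in> carrier_mat n r" using C by simp
  have "(Yt\<^sup>T * (A - c1 \<cdot>\<^sub>m B + c2 \<cdot>\<^sub>m C)) $$ (a, b)
      = (\<Sum>j<n. Yt $$ (j, a) * (A - c1 \<cdot>\<^sub>m B + c2 \<cdot>\<^sub>m C) $$ (j, b))"
    by (subst prod_entry[of "Yt\<^sup>T" m n _ r a b]) (use Yt M a b in auto)
  also have "\<dots> = (\<Sum>j<n. Yt $$ (j, a) * A $$ (j, b) - c1 * (Yt $$ (j, a) * B $$ (j, b))
                      + c2 * (Yt $$ (j, a) * C $$ (j, b)))"
    using A B C b by (intro sum.cong refl) (simp add: algebra_simps)
  also have "\<dots> = (Yt\<^sup>T * A) $$ (a, b) - c1 * (Yt\<^sup>T * B) $$ (a, b) + c2 * (Yt\<^sup>T * C) $$ (a, b)"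
    using prod_entry[of "Yt\<^sup>T" m n A r a b] prod_entry[of "Yt\<^sup>T" m n B r a b]
      prod_entry[of "Yt\<^sup>T" m n C r a b] Yt A B C a b
    by (simp add: sum.distrib sum_subtractf sum_distrib_left)
  finally show ?thesis .
qed

theorem theorem6p6:
  fixes k :: nat and n r :: "nat \<Rightarrow> nat"
    and X Yb Dl U Sig V Gold Gnew :: "nat \<Rightarrow> real mat"
    and t :: real
    and H L :: "cidx \<Rightarrow> cidx \<Rightarrow> real"
  assumes dims: "\<forall>i<k. r i \<le> n i"
    and X_car: "\<forall>i<k. X i \<in> carrier_mat (n i) (r i)"
    and Yb_car: "\<forall>i<k. Yb i \<in> carrier_mat (n i) (n i - r i)"
    and XY_orth: "\<forall>i<k. orthogonal_mat (mcat (X i) (Yb i))"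
    and Dl_tan: "\<forall>i<k. Dl i \<in> carrier_mat (n i) (r i) \<and> (X i)\<^sup>T * Dl i = 0\<^sub>m (r i) (r i)"
    and svd: "\<forall>i<k. U i \<in> carrier_mat (n i) (r i) \<and> Sig i \<in> carrier_mat (r i) (r i)
                  \<and> V i \<in> carrier_mat (r i) (r i)
                  \<and> (U i)\<^sup>T * U i = 1\<^sub>m (r i) \<and> orthogonal_mat (V i)
                  \<and> diagonal_mat (Sig i) \<and> (\<forall>j<r i. 0 \<le> Sig i $$ (j, j))
                  \<and> Dl i = U i * Sig i * (V i)\<^sup>T"
    and grads: "\<forall>i<k. Gold i \<in> carrier_mat (n i) (r i) \<and> Gnew i \<in> carrier_mat (n i) (r i)"
    and HLL: "\<forall>p\<in>coord_idx k n r. \<forall>q\<in>coord_idx k n r. H p q = cmm (coord_idx k n r) L (ctransp L) p q"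
    and L_inv: "cinvertible (coord_idx k n r) L"
  defines "Yt \<equiv> (\<lambda>i. grass_transp (X i) (U i) (Sig i) (V i) t * Yb i)"
    and "S \<equiv> (\<lambda>i. t \<cdot>\<^sub>m (grass_transp (X i) (U i) (Sig i) (V i) t * Dl i))"
    and "Yv \<equiv> (\<lambda>i. grass_proj (grass_geod (X i) (U i) (Sig i) (V i) t) * Gnew i
                   - grass_transp (X i) (U i) (Sig i) (V i) t * (grass_proj (X i) * Gold i))"
  assumes curv: "tinner k S Yv > 0"
  shows "bfgs_optimal (coord_idx k n r) H L (coord Yt S) (coord Yt Yv)
           (\<lambda>p q. coord Yt (bfgs_tangent_update k
                (\<lambda>Z. lift n r Yt (cmv (coord_idx k n r) H (coord Yt Z))) S Yv
                (lift n r Yt (\<lambda>p'. if p' = q then 1 else 0))) p)"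
proof -
  let ?I = "coord_idx k n r"
  have fin: "finite ?I" using sum_I by blast
  have bf: "Yt i \<in> carrier_mat (n i) (n i - r i) \<and> (Yt i)\<^sup>T * Yt i = 1\<^sub>m (n i - r i)
      \<and> S i = Yt i * (t \<cdot>\<^sub>m ((Yb i)\<^sup>T * Dl i))" if i: "i < k" for i
  proof -
    have f1: "r i \<le> n i" "X i \<in> carrier_mat (n i) (r i)" "Yb i \<in> carrier_mat (n i) (n i - r i)"
      "orthogonal_mat (mcat (X i) (Yb i))" "Dl i \<in> carrier_mat (n i) (r i)" "(X i)\<^sup>T * Dl i = 0\<^sub>m (r i) (r i)"
      using dims X_car Yb_car XY_orth Dl_tan i by auto
    have f2: "U i \<in> carrier_mat (n i) (r i)" "Sig i \<in> carrier_mat (r i) (r i)" "V i \<in> carrier_mat (r i) (r i)"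
      "(U i)\<^sup>T * U i = 1\<^sub>m (r i)" "orthogonal_mat (V i)" "diagonal_mat (Sig i)" "Dl i = U i * Sig i * (V i)\<^sup>T"
      using svd i by auto
    note bf0 = block_facts[OF f1 f2, of t]
    show ?thesis unfolding Yt_def S_def using bf0 by blast
  qed
  have Tc: "grass_transp (X i) (U i) (Sig i) (V i) t \<in> carrier_mat (n i) (n i)" if "i < k" for i
    using grass_transp_carrier[of "X i" "n i" "r i" "U i" "Sig i" "V i" t] X_car svd that by auto
  have Ytc: "\<forall>i<k. Yt i \<in> carrier_mat (n i) (n i - r i)" using bf by blast
  have Sc: "\<forall>i<k. S i \<in> carrier_mat (n i) (r i)"
  proof (intro allI impI)
    fix i assume i: "i < k"
    show "S i \<in> carrier_mat (n i) (r i)" unfolding S_def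
      by (intro smult_carrier_mat mult_carrier_mat[OF Tc[OF i]]) (use Dl_tan i in auto)
  qed
  have Yvc: "\<forall>i<k. Yv i \<in> carrier_mat (n i) (r i)"
  proof (intro allI impI)
    fix i assume i: "i < k"
    have "grass_transp (X i) (U i) (Sig i) (V i) t * (grass_proj (X i) * Gold i) \<in> carrier_mat (n i) (r i)"
      using Tc[OF i] grads X_car i unfolding grass_proj_def
      by (intro mult_carrier_mat[of _ _ "n i"]) (auto intro!: minus_carrier_mat)
    then show "Yv i \<in> carrier_mat (n i) (r i)" unfolding Yv_def by (rule minus_carrier_mat)
  qed
  have liftc: "\<forall>i<k. lift n r Yt d i \<in> carrier_mat (n i) (r i)" for d
    using Ytc unfolding lift_def by auto
  have cl: "coord Yt (lift n r Yt d) p = d p" if "p \<in> ?I" for d p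
  proof -
    obtain i a b where p: "p = (i, a, b)" by (metis prod_cases3)
    then have "i < k" "a < n i - r i" "b < r i" using that unfolding coord_idx_def by auto
    then show ?thesis unfolding p using coord_lift[of Yt i n r a b d] bf by auto
  qed
  define D where "D = (\<lambda>(i, a, b). (t \<cdot>\<^sub>m ((Yb i)\<^sup>T * Dl i)) $$ (a, b))"
  have Slift: "S i = lift n r Yt D i" if i: "i < k" for i
  proof -
    have "mat (n i - r i) (r i) (\<lambda>(a, b). D (i, a, b)) = t \<cdot>\<^sub>m ((Yb i)\<^sup>T * Dl i)"
    proof -
      have c: "Yb i \<in> carrier_mat (n i) (n i - r i)" "Dl i \<in> carrier_mat (n i) (r i)" using Yb_car Dl_tan i by auto
      show ?thesis by (intro eq_matI) (auto simp: D_def carrier_matD[OF c(1)] carrier_matD[OF c(2)])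
    qed
    then show ?thesis unfolding lift_def using bf[OF i] by simp
  qed
  have coordS: "coord Yt S p = D p" if "p \<in> ?I" for p
  proof -
    obtain i a b where p: "p = (i, a, b)" by (metis prod_cases3)
    then have "i < k" using that unfolding coord_idx_def by auto
    then have "coord Yt S p = coord Yt (lift n r Yt D) p" unfolding p coord_def using Slift by simp
    then show ?thesis using cl[OF that] by simp
  qed
  have tin_lift: "tinner k S Z = tinner k (lift n r Yt D) Z" for Z
    unfolding tinner_def using Slift by (intro sum.cong refl) auto
  have SYv: "tinner k S Yv = cinner ?I (coord Yt Yv) (coord Yt S)"
    unfolding tin_lift tinner_lift[OF Ytc Yvc] cinner_def using coordS
    by (intro sum.cong refl) (simp add: mult.commute)
  have ys: "cinner ?I (coord Yt Yv) (coord Yt S) > 0" using curv SYv by simp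
  define h where "h = cmv ?I H (coord Yt S)"
  have Hform: "coord Yt (bfgs_tangent_update k
                (\<lambda>Z. lift n r Yt (cmv ?I H (coord Yt Z))) S Yv
                (lift n r Yt (\<lambda>p'. if p' = q then 1 else 0))) p
     = H p q - cmv ?I H (coord Yt S) p * cmv ?I H (coord Yt S) q / cinner ?I (coord Yt S) (cmv ?I H (coord Yt S))
       + coord Yt Yv p * coord Yt Yv q / cinner ?I (coord Yt Yv) (coord Yt S)"
    if p: "p \<in> ?I" and q: "q \<in> ?I" for p q
  proof -
    define Eq where "Eq = lift n r Yt (\<lambda>p'. if p' = q then 1 else 0)"
    define HOp where "HOp = (\<lambda>Z. lift n r Yt (cmv ?I H (coord Yt Z)))"
    have cEq: "coord Yt Eq p' = (if p' = q then 1 else 0)" if "p' \<in> ?I" for p'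
      unfolding Eq_def using cl[OF that] by simp
    have delta: "(\<Sum>q'\<in>?I. f q' * coord Yt Eq q') = f q" for f :: "cidx \<Rightarrow> real"
    proof -
      have "(\<Sum>q'\<in>?I. f q' * coord Yt Eq q') = (\<Sum>q'\<in>?I. if q = q' then f q' else 0)"
        using cEq by (intro sum.cong refl) auto
      then show ?thesis using q fin by simp
    qed
    have Eqc: "\<forall>i<k. Eq i \<in> carrier_mat (n i) (r i)" unfolding Eq_def using liftc by blast
    have n1: "tinner k (HOp S) Eq = h q"
      unfolding HOp_def tinner_lift[OF Ytc Eqc] cinner_def h_def using delta by simp
    have d1: "tinner k (HOp S) S = cinner ?I (coord Yt S) h"
      unfolding HOp_def tinner_lift[OF Ytc Sc] cinner_def h_def by (simp add: mult.commute)
    have n2: "tinner k Yv Eq = coord Yt Yv q"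
    proof -
      have "tinner k Yv Eq = tinner k Eq Yv" using Yvc Eqc by (intro tinner_sym) auto
      also have "\<dots> = cinner ?I (\<lambda>p'. if p' = q then 1 else 0) (coord Yt Yv)"
        unfolding Eq_def by (rule tinner_lift[OF Ytc Yvc])
      also have "\<dots> = (\<Sum>p'\<in>?I. if q = p' then coord Yt Yv p' else 0)"
        unfolding cinner_def by (intro sum.cong refl) auto
      also have "\<dots> = coord Yt Yv q" using q fin by simp
      finally show ?thesis .
    qed
    obtain i a b where pp: "p = (i, a, b)" by (metis prod_cases3)
    then have iab: "i < k" "a < n i - r i" "b < r i" using p unfolding coord_idx_def by auto
    have HOpc: "HOp Z i \<in> carrier_mat (n i) (r i)" for Z unfolding HOp_def using liftc iab by blast
    have "coord Yt (bfgs_tangent_update k HOp S Yv Eq) p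
        = coord Yt (HOp Eq) p - tinner k (HOp S) Eq / tinner k (HOp S) S * coord Yt (HOp S) p
          + tinner k Yv Eq / tinner k S Yv * coord Yt Yv p"
      unfolding bfgs_tangent_update_def pp coord_def
      using coord_lin[of "Yt i" "n i" "n i - r i" "HOp Eq i" "r i" "HOp S i" "Yv i" a b] bf HOpc Yvc iab
      by simp
    also have "coord Yt (HOp Eq) p = H p q"
      unfolding HOp_def cl[OF p] cmv_def using delta by simp
    also have "coord Yt (HOp S) p = h p" unfolding HOp_def cl[OF p] h_def by simp
    finally show ?thesis
      unfolding Eq_def[symmetric] HOp_def[symmetric] n1 d1 n2 SYv h_def
      by (simp add: mult.commute)
  qed
  show ?thesis
    by (rule partA[OF fin HLL L_inv ys]) (use Hform in simp)
qed

end
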